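(* Let $\xi\in\mathcal N_{\rm pol}$ with $0\in\xi$, and let $\ell>0$. Suppose $\xi\cap K_\ell(z)\ne\emptyset$ for every $z\in I$. Then $D(0|\xi)\subset B_{6\ell d^2}(0)$.
   Context: $\mathcal N$ is the set of locally finite subsets of $\mathbb R^d$; for $x\in\xi$, $\mathrm{Vor}(x|\xi)=\{y:|y-x|\le|y-z|\ \forall z\in\xi\}$; $\mathcal N_{\rm pol}$ is the set of $\xi\in\mathcal N$ all of whose Voronoi cells are convex polytopes. For $\xi\in\mathcal N_{\rm pol}$ and $x\in\xi$, the fundamental region $D(x|\xi)$ is the union of the closed balls centered at $v$ with radius $|v-x|$, as $v$ ranges over the vertices of $\mathrm{Vor}(x|\xi)$. $B_r(0)$ is the closed Euclidean ball of radius $r$ centered at $0$. $I:=\{z\in\mathbb Z^d:|z|_\infty=d\}$ and $K_\ell(z):=z\ell+[-\ell/2,\ell/2]^d$. *)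

theory Defs
  imports "HOL-Analysis.Analysis"
begin

(* Points of R^d are modelled as real^'n, d = CARD('n); norm is Euclidean. *)

definition locally_finite :: "(real^'n) set \<Rightarrow> bool" where
  "locally_finite \<xi> \<longleftrightarrow> (\<forall>r::real. finite (\<xi> \<inter> cball 0 r))"

definition Vor :: "real^'n \<Rightarrow> (real^'n) set \<Rightarrow> (real^'n) set" where
  "Vor x \<xi> = {y. \<forall>z\<in>\<xi>. dist y x \<le> dist y z}"

definition N_pol :: "(real^'n) set set" where
  "N_pol = {\<xi>. locally_finite \<xi> \<and> (\<forall>x\<in>\<xi>. polytope (Vor x \<xi>))}"

definition vertices :: "(real^'n) set \<Rightarrow> (real^'n) set" where
  "vertices P = {v. v extreme_point_of P}"

definition fund_region :: "real^'n \<Rightarrow> (real^'n) set \<Rightarrow> (real^'n) set" where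
  "fund_region x \<xi> = (\<Union>v\<in>vertices (Vor x \<xi>). cball v (dist v x))"

definition I_set :: "(int^'n) set" where
  "I_set = {z. (\<forall>i. \<bar>z$i\<bar> \<le> int CARD('n)) \<and> (\<exists>i. \<bar>z$i\<bar> = int CARD('n))}"

definition cube_K :: "real \<Rightarrow> int^'n \<Rightarrow> (real^'n) set" where
  "cube_K l z = {x. \<forall>i. \<bar>x$i - l * real_of_int (z$i)\<bar> \<le> l / 2}"

end

theory Submission
  imports Defs
begin

lemma vor_bound:
  fixes \<xi> :: "(real^'n) set" and l :: real
  assumes "l > 0"
    and cov: "\<And>z. z \<in> I_set \<Longrightarrow> \<xi> \<inter> cube_K l z \<noteq> {}"
    and y: "y \<in> Vor 0 \<xi>"
  shows "norm y \<le> 3 * l * real CARD('n) ^ 2"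
proof (rule ccontr)
  assume big: "\<not> ?thesis"
  define d where "d = real CARD('n)"
  have d1: "d \<ge> 1" unfolding d_def by simp
  define z :: "int^'n" where "z = (\<chi> j. if y$j \<ge> 0 then int CARD('n) else - int CARD('n))"
  have "z \<in> I_set" unfolding I_set_def z_def by auto
  then obtain x where x: "x \<in> \<xi>" "x \<in> cube_K l z" using cov by blast
  have cx: "\<bar>x$j - l * real_of_int (z$j)\<bar> \<le> l/2" for j using x(2) unfolding cube_K_def by auto
  have comp1: "y$j * x$j \<ge> l*(d - 1/2) * \<bar>y$j\<bar>" for j
  proof (cases "y$j \<ge> 0")
    case True
    hence "z$j = int CARD('n)" unfolding z_def by simp
    hence "real_of_int (z$j) = d" unfolding d_def by simp
    hence "\<bar>x$j - l * d\<bar> \<le> l/2" using cx[of j] by simp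
    moreover have "l*(d-1/2) = l*d - l/2" by (simp add: algebra_simps)
    ultimately have "x$j \<ge> l*(d-1/2)" by linarith
    hence "y$j * (l*(d-1/2)) \<le> y$j * x$j" using True by (intro mult_left_mono) auto
    thus ?thesis using True by (simp add: mult.commute)
  next
    case False
    hence "z$j = - int CARD('n)" unfolding z_def by simp
    hence "real_of_int (z$j) = - d" unfolding d_def by simp
    hence "\<bar>x$j + l * d\<bar> \<le> l/2" using cx[of j] by simp
    moreover have "l*(d-1/2) = l*d - l/2" by (simp add: algebra_simps)
    ultimately have "x$j \<le> - l*(d-1/2)" by linarith
    hence "(-y$j) * (-x$j) \<ge> (-y$j) * (l*(d-1/2))" using False by (intro mult_left_mono) auto
    thus ?thesis using False by (simp add: mult.commute)
  qed
  have comp2: "(x$j)^2 \<le> (l*(d+1/2))^2" for j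
  proof -
    have "\<bar>z$j\<bar> = int CARD('n)" unfolding z_def by auto
    hence "\<bar>real_of_int (z$j)\<bar> = d" unfolding d_def by (metis of_int_abs of_int_of_nat_eq)
    hence "\<bar>l * real_of_int (z$j)\<bar> = l*d" using \<open>l>0\<close> by (simp add: abs_mult)
    moreover have "\<bar>x$j\<bar> \<le> \<bar>x$j - l * real_of_int (z$j)\<bar> + \<bar>l * real_of_int (z$j)\<bar>"
      using abs_triangle_ineq[of "x$j - l * real_of_int (z$j)" "l * real_of_int (z$j)"] by simp
    moreover have "l*(d+1/2) = l*d + l/2" by (simp add: algebra_simps)
    ultimately have "\<bar>x$j\<bar> \<le> l*(d+1/2)" using cx[of j] by linarith
    thus ?thesis by (metis abs_ge_zero abs_power2 power2_abs power_mono)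
  qed
  have ip: "inner y x \<ge> l*(d-1/2) * norm y"
  proof -
    have "l*(d-1/2) * norm y \<le> l*(d-1/2) * (\<Sum>j\<in>UNIV. \<bar>y$j\<bar>)"
      using \<open>l>0\<close> d1 norm_le_l1_cart[of y] by (intro mult_left_mono) auto
    also have "\<dots> = (\<Sum>j\<in>UNIV. l*(d-1/2) * \<bar>y$j\<bar>)" by (simp add: sum_distrib_left)
    also have "\<dots> \<le> (\<Sum>j\<in>UNIV. y$j * x$j)" by (intro sum_mono comp1)
    also have "\<dots> = inner y x" by (simp add: inner_vec_def)
    finally show ?thesis .
  qed
  have nx: "(norm x)^2 \<le> d * (l*(d+1/2))^2"
  proof -
    have "(norm x)^2 = inner x x" by (simp add: power2_norm_eq_inner)
    also have "\<dots> = (\<Sum>j\<in>UNIV. (x$j)^2)" by (simp add: inner_vec_def power2_eq_square)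
    also have "\<dots> \<le> (\<Sum>j\<in>(UNIV::'n set). (l*(d+1/2))^2)" by (intro sum_mono comp2)
    also have "\<dots> = d * (l*(d+1/2))^2" unfolding d_def by simp
    finally show ?thesis .
  qed
  have "dist y 0 \<le> dist y x" using y x(1) unfolding Vor_def by auto
  hence "(norm y)^2 \<le> (norm (y - x))^2" by (simp add: dist_norm)
  also have "(norm (y - x))^2 = (norm y)^2 - 2 * inner y x + (norm x)^2"
    by (simp add: power2_norm_eq_inner inner_diff_left inner_diff_right inner_commute)
  finally have key: "2 * inner y x \<le> (norm x)^2" by simp
  have nb: "norm y > 3 * l * d^2" using big unfolding d_def by simp
  have "2 * (l*(d-1/2)) * norm y > 2 * (l*(d-1/2)) * (3*l*d^2)"
    using nb \<open>l>0\<close> d1 by (intro mult_strict_left_mono) auto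
  moreover have "2 * (l*(d-1/2)) * (3*l*d^2) \<ge> d * (l*(d+1/2))^2"
  proof -
    have dd: "d*d \<ge> 1*d" using d1 by (intro mult_right_mono) auto
    have "5*d^2 - 4*d - 1/4 \<ge> 0" using d1 dd unfolding power2_eq_square by linarith
    hence "3*d*(2*d-1) \<ge> (d+1/2)^2" by (simp add: power2_eq_square algebra_simps)
    hence "(l^2*d) * (3*d*(2*d-1)) \<ge> (l^2*d) * (d+1/2)^2" using d1 \<open>l>0\<close> by (intro mult_left_mono) auto
    thus ?thesis by (simp add: power2_eq_square algebra_simps)
  qed
  ultimately show False using key ip nx by linarith
qed

theorem lemma9p3:
  fixes \<xi> :: "(real^'n) set" and l :: real
  assumes "\<xi> \<in> N_pol" and "0 \<in> \<xi>" and "l > 0"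
    and "\<And>z. z \<in> I_set \<Longrightarrow> \<xi> \<inter> cube_K l z \<noteq> {}"
  shows "fund_region 0 \<xi> \<subseteq> cball 0 (6 * l * real CARD('n) ^ 2)"
proof
  fix w assume "w \<in> fund_region 0 \<xi>"
  then obtain v where v: "v \<in> vertices (Vor 0 \<xi>)" "w \<in> cball v (dist v 0)"
    unfolding fund_region_def by blast
  have "v \<in> Vor 0 \<xi>" using v(1) unfolding vertices_def extreme_point_of_def by auto
  hence nv: "norm v \<le> 3 * l * real CARD('n) ^ 2" using vor_bound assms(3,4) by blast
  have "norm w \<le> norm v + norm (w - v)" by (metis norm_triangle_sub add.commute)
  also have "norm (w - v) \<le> norm v" using v(2) by (simp add: dist_norm norm_minus_commute)
  finally show "w \<in> cball 0 (6 * l * real CARD('n) ^ 2)" using nv by simp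
qed

end
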